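(* Let $C$ be a copula on $[0,1]^d$ such that $C(\mathbf{u})=1-\|\mathbf{1}-\mathbf{u}\|_D+o(\|\mathbf{1}-\mathbf{u}\|_D)$ as $\mathbf{u}\uparrow\mathbf{1}$, where $\|\cdot\|_D$ is a $D$-norm on $\mathbb{R}^d$. Let $\|\cdot\|_C$ be the $F$-norm on $\mathbb{R}^{d+1}$ corresponding to $C$. Then $$1-\|(x,1,\dots,1)\|_C=(1-x)-\frac{(1-x)^2}{2}\|\mathbf{1}\|_D+o((1-x)^2)\quad\text{as }x\uparrow1.$$
   Context: A copula on $[0,1]^d$ is a distribution function on $\mathbb{R}^d$ with standard uniform margins. If $\mathbf{U}=(U_1,\dots,U_d)$ has distribution function $C$, its $F$-norm is $\|\mathbf{x}\|_C=E(\max(|x_0|,|x_1|U_1,\dots,|x_d|U_d))$, $\mathbf{x}\in\mathbb{R}^{d+1}$. A $D$-norm on $\mathbb{R}^d$ is a norm $\|\mathbf{x}\|_D=E(\max(|x_1|Z_1,\dots,|x_d|Z_d))$ with $\mathbf{Z}$ componentwise nonnegative and $E(Z_i)=1$. $\mathbf{1}=(1,\dots,1)\in\mathbb{R}^d$; $\mathbf{u}\uparrow\mathbf{1}$ is componentwise. *)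

theory Defs
  imports "HOL-Probability.Probability" "HOL-Library.Landau_Symbols"
begin

definition copula_rv :: "'a measure \<Rightarrow> ('a \<Rightarrow> real^'d::finite) \<Rightarrow> bool" where
  "copula_rv M U \<longleftrightarrow> prob_space M \<and> U \<in> borel_measurable M \<and>
     (\<forall>i. \<forall>t\<in>{0..1}. measure M {\<omega>\<in>space M. U \<omega> $ i \<le> t} = t)"

definition copula_cdf :: "'a measure \<Rightarrow> ('a \<Rightarrow> real^'d::finite) \<Rightarrow> real^'d \<Rightarrow> real" where
  "copula_cdf M U u = measure M {\<omega>\<in>space M. \<forall>i. U \<omega> $ i \<le> u $ i}"

text \<open>F-norm on R^(d+1), written with the 0-th coordinate x0 separated:
  ||(x0,x)||_C = E(max(|x0|, |x_1| U_1, ..., |x_d| U_d)).\<close>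
definition F_norm :: "'a measure \<Rightarrow> ('a \<Rightarrow> real^'d::finite) \<Rightarrow> real \<Rightarrow> real^'d \<Rightarrow> real" where
  "F_norm M U x0 x = integral\<^sup>L M (\<lambda>\<omega>. max \<bar>x0\<bar> (Max (range (\<lambda>i. \<bar>x $ i\<bar> * U \<omega> $ i))))"

definition D_norm_generator :: "'b measure \<Rightarrow> ('b \<Rightarrow> real^'d::finite) \<Rightarrow> bool" where
  "D_norm_generator N Z \<longleftrightarrow> prob_space N \<and> Z \<in> borel_measurable N \<and>
     (\<forall>i. (AE \<omega> in N. Z \<omega> $ i \<ge> 0) \<and> integrable N (\<lambda>\<omega>. Z \<omega> $ i) \<and>
          integral\<^sup>L N (\<lambda>\<omega>. Z \<omega> $ i) = 1)"

definition D_norm :: "'b measure \<Rightarrow> ('b \<Rightarrow> real^'d::finite) \<Rightarrow> real^'d \<Rightarrow> real" where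
  "D_norm N Z x = integral\<^sup>L N (\<lambda>\<omega>. Max (range (\<lambda>i. \<bar>x $ i\<bar> * Z \<omega> $ i)))"

end

theory Submission
  imports Defs
begin

lemma D_norm_vec:
  fixes N :: "'b measure" and Z :: "'b \<Rightarrow> real^'d::finite"
  assumes "0 \<le> s"
  shows "D_norm N Z (vec s) = s * D_norm N Z 1"
proof -
  have "Max (range (\<lambda>i. \<bar>vec s $ i\<bar> * Z w $ i)) = s * Max (range (\<lambda>i. \<bar>(1::real^'d) $ i\<bar> * Z w $ i))" for w
  proof -
    have m: "mono ((*) s)" using assms by (auto intro: monoI mult_left_mono)
    have "s * Max (range (\<lambda>i. Z w $ i)) = Max ((*) s ` range (\<lambda>i. Z w $ i))"
      by (rule mono_Max_commute[OF m]) auto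
    also have "\<dots> = Max (range (\<lambda>i. s * Z w $ i))" by (simp add: image_image)
    finally show ?thesis using assms by simp
  qed
  then show ?thesis unfolding D_norm_def by (simp add: integral_mult_right_zero)
qed

lemma D_norm_one_nonneg:
  assumes "D_norm_generator N Z"
  shows "0 \<le> D_norm N Z (1::real^'d::finite)"
proof -
  have "AE w in N. \<forall>i. 0 \<le> Z w $ i"
    using assms unfolding D_norm_generator_def by (simp add: AE_all_countable)
  then have "AE w in N. 0 \<le> Max (range (\<lambda>i. \<bar>(1::real^'d) $ i\<bar> * Z w $ i))"
  proof eventually_elim
    case (elim w)
    obtain i :: 'd where True by simp
    have "Z w $ i \<le> Max (range (\<lambda>i. Z w $ i))" by (rule Max_ge) auto
    then have "0 \<le> Max (range (\<lambda>i. Z w $ i))" using elim[rule_format, of i] by linarith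
    then show ?case by simp
  qed
  then show ?thesis unfolding D_norm_def by (rule integral_nonneg_AE)
qed

lemma integral_lin:
  fixes c x :: real
  assumes "0 \<le> c" "x \<le> 1"
  shows "(\<integral>\<^sup>+ t. ennreal (indicator {x..1} t * (c * (1 - t))) \<partial>lborel) = ennreal (c * (1 - x)^2 / 2)"
proof -
  have "((\<lambda>t. c * (1 - t)) has_integral ((\<lambda>t. - c * (1 - t)^2 / 2) 1 - (\<lambda>t. - c * (1 - t)^2 / 2) x)) {x..1}"
    apply (rule fundamental_theorem_of_calculus[OF assms(2)])
    apply (auto intro!: derivative_eq_intros simp: has_real_derivative_iff_has_vector_derivative[symmetric])
    apply (simp add: field_simps)
    done
  then have "((\<lambda>t. c * (1 - t)) has_integral (c * (1 - x)^2 / 2)) {x..1}" by simp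
  then show ?thesis
    by (rule nn_integral_has_integral_lebesgue[rotated]) (use assms in auto)
qed

theorem proposition2p21:
  fixes M :: "'a measure" and U :: "'a \<Rightarrow> real^'d::finite"
    and N :: "'b measure" and Z :: "'b \<Rightarrow> real^'d"
  assumes "copula_rv M U"
    and "D_norm_generator N Z"
    and "(\<lambda>u. copula_cdf M U u - (1 - D_norm N Z (1 - u)))
           \<in> o[at 1 within cbox 0 1](\<lambda>u. D_norm N Z (1 - u))"
  shows "(\<lambda>x. (1 - F_norm M U x 1) - ((1 - x) - (1 - x)^2 / 2 * D_norm N Z 1))
           \<in> o[at_left 1](\<lambda>x. (1 - x)^2)"
proof -
  have ps: "prob_space M" and Umeas: "U \<in> borel_measurable M"
    and marg: "\<And>i t. t \<in> {0..1} \<Longrightarrow> measure M {w\<in>space M. U w $ i \<le> t} = t"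
    using assms(1) unfolding copula_rv_def by auto
  interpret P: prob_space M by (rule ps)
  define Y where "Y w = Max (range (\<lambda>i. U w $ i))" for w
  have Umeas_i: "(\<lambda>w. U w $ i) \<in> borel_measurable M" for i
    using measurable_compose[OF Umeas borel_measurable_nth] by simp
  have Ymeas: "Y \<in> borel_measurable M"
    unfolding Y_def using borel_measurable_Max[of UNIV "\<lambda>i w. U w $ i" M] Umeas_i by simp
  have Yle: "Y w \<le> t \<longleftrightarrow> (\<forall>i. U w $ i \<le> t)" for w t
    unfolding Y_def by (subst Max_le_iff) auto
  have "AE w in M. U w $ i \<le> 1" for i
  proof -
    have "{w\<in>space M. U w $ i \<le> 1} \<in> P.events" using Umeas_i[of i] by measurable
    moreover have "measure M {w\<in>space M. U w $ i \<le> 1} = 1" using marg[of 1 i] by simp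
    ultimately show ?thesis using P.prob_Collect_eq_1[of "\<lambda>w. U w $ i \<le> 1"] by simp
  qed
  then have AEY: "AE w in M. Y w \<le> 1" unfolding Yle by (simp add: AE_all_countable)
  define G where "G t = measure M {w\<in>space M. t < Y w}" for t
  have Cvec: "copula_cdf M U (vec t) = measure M {w\<in>space M. Y w \<le> t}" for t
    unfolding copula_cdf_def Yle by simp
  have G_eq: "G t = 1 - copula_cdf M U (vec t)" for t
  proof -
    have "{w\<in>space M. Y w \<le> t} \<in> P.events" using Ymeas by measurable
    from P.prob_neg[OF this] show ?thesis unfolding G_def Cvec by (simp add: not_le)
  qed
  have G_ge1: "G t = 0" if "1 \<le> t" for t
  proof -
    have "{w\<in>space M. Y w \<le> t} \<in> P.events" using Ymeas by measurable
    moreover have "AE w in M. Y w \<le> t" using AEY by eventually_elim (use that in auto)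
    ultimately have "measure M {w\<in>space M. Y w \<le> t} = 1" using P.prob_Collect_eq_1[of "\<lambda>w. Y w \<le> t"] by simp
    then show ?thesis unfolding G_eq Cvec by simp
  qed
  have G_nn: "0 \<le> G t" for t unfolding G_def by simp
  have Fn: "F_norm M U x 1 = (\<integral>w. max x (Y w) \<partial>M)" if "0 \<le> x" for x
    unfolding F_norm_def Y_def using that by simp
  have tail: "ennreal (F_norm M U x 1 - x) = (\<integral>\<^sup>+ t. ennreal (indicator {x..} t * G t) \<partial>lborel)"
    and Fx: "x \<le> F_norm M U x 1"
    if x0: "0 \<le> x" for x
  proof -
    have int: "integrable M (\<lambda>w. max x (Y w))"
    proof (rule P.integrable_const_bound[where B="max x 1"])
      show "AE w in M. norm (max x (Y w)) \<le> max x 1" using AEY by eventually_elim (use x0 in auto)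
    qed (use Ymeas in measurable)
    have "F_norm M U x 1 - x = (\<integral>w. max x (Y w) - x \<partial>M)"
      unfolding Fn[OF x0] using int by (simp add: P.prob_space)
    moreover have "0 \<le> (\<integral>w. max x (Y w) - x \<partial>M)" by (rule integral_nonneg_AE) auto
    ultimately show "x \<le> F_norm M U x 1" by linarith
    have "ennreal (\<integral>w. max x (Y w) - x \<partial>M) = (\<integral>\<^sup>+ w. ennreal (max x (Y w) - x) \<partial>M)"
      by (rule nn_integral_eq_integral[symmetric]) (use int in auto)
    also have "\<dots> = (\<integral>\<^sup>+ w. (\<integral>\<^sup>+ t. indicator {t. x \<le> t \<and> t < Y w} t \<partial>lborel) \<partial>M)"
    proof (rule nn_integral_cong)
      fix w
      show "ennreal (max x (Y w) - x) = (\<integral>\<^sup>+ t. indicator {t. x \<le> t \<and> t < Y w} t \<partial>lborel)"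
      proof (cases "x \<le> Y w")
        case True
        have "{t. x \<le> t \<and> t < Y w} = {x..<Y w}" by auto
        then show ?thesis using True by (simp add: emeasure_lborel_Ico)
      next
        case False
        have "{t. x \<le> t \<and> t < Y w} = {}" using False by auto
        then show ?thesis using False by simp
      qed
    qed
    also have "\<dots> = (\<integral>\<^sup>+ t. (\<integral>\<^sup>+ w. indicator {t. x \<le> t \<and> t < Y w} t \<partial>M) \<partial>lborel)"
    proof (rule pair_sigma_finite.Fubini'[symmetric])
      show "pair_sigma_finite M lborel"
        by (simp add: pair_sigma_finite_def P.sigma_finite_measure_axioms lborel.sigma_finite_measure_axioms)
      have "(\<lambda>p. indicator {p\<in>space (M \<Otimes>\<^sub>M lborel). x \<le> snd p \<and> snd p < Y (fst p)} p :: ennreal) \<in> borel_measurable (M \<Otimes>\<^sub>M lborel)"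
        using Ymeas by measurable
      then show "(\<lambda>(w, t). indicator {t. x \<le> t \<and> t < Y w} t :: ennreal) \<in> borel_measurable (M \<Otimes>\<^sub>M lborel)"
        by (rule measurable_cong[THEN iffD1, rotated]) (auto simp: indicator_def space_pair_measure)
    qed
    also have "\<dots> = (\<integral>\<^sup>+ t. ennreal (indicator {x..} t * G t) \<partial>lborel)"
    proof (rule nn_integral_cong)
      fix t :: real
      have ev: "{w\<in>space M. t < Y w} \<in> P.events" using Ymeas by measurable
      have "(\<integral>\<^sup>+ w. indicator {t. x \<le> t \<and> t < Y w} t \<partial>M) = (\<integral>\<^sup>+ w. indicator {x..} t * indicator {w\<in>space M. t < Y w} w \<partial>M)"
        by (rule nn_integral_cong) (auto simp: indicator_def)
      also have "\<dots> = indicator {x..} t * emeasure M {w\<in>space M. t < Y w}"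
        by (rule nn_integral_cmult_indicator[OF ev])
      also have "\<dots> = ennreal (indicator {x..} t * G t)"
        unfolding G_def P.emeasure_eq_measure by (simp add: indicator_def)
      finally show "(\<integral>\<^sup>+ w. indicator {t. x \<le> t \<and> t < Y w} t \<partial>M) = ennreal (indicator {x..} t * G t)" .
    qed
    finally show "ennreal (F_norm M U x 1 - x) = (\<integral>\<^sup>+ t. ennreal (indicator {x..} t * G t) \<partial>lborel)"
      using \<open>F_norm M U x 1 - x = _\<close> by simp
  qed
  define D1 where "D1 = D_norm N Z 1"
  have D1nn: "0 \<le> D1" unfolding D1_def by (rule D_norm_one_nonneg[OF assms(2)])
  have bounds: "\<bar>F_norm M U x 1 - x - D1 * (1 - x)^2 / 2\<bar> \<le> e * (1 - x)^2 / 2"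
    if x01: "0 \<le> x" "x < 1" and e0: "0 \<le> e"
      and Q: "\<And>t. x \<le> t \<Longrightarrow> t < 1 \<Longrightarrow> \<bar>G t - D1 * (1 - t)\<bar> \<le> e * (1 - t)" for x e
  proof -
    have "ennreal (F_norm M U x 1 - x) \<le> (\<integral>\<^sup>+ t. ennreal (indicator {x..1} t * ((D1 + e) * (1 - t))) \<partial>lborel)"
      unfolding tail[OF x01(1)]
    proof (rule nn_integral_mono, rule ennreal_leI)
      fix t :: real
      show "indicator {x..} t * G t \<le> indicator {x..1} t * ((D1 + e) * (1 - t))"
      proof (cases "t < x")
        case True then show ?thesis by simp
      next
        case False
        show ?thesis
        proof (cases "t < 1")
          case True
          then show ?thesis using False Q[of t] by (simp add: algebra_simps abs_le_iff)
        next
          case False2: False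
          then show ?thesis using False G_ge1[of t] D1nn e0 by (auto simp: indicator_def)
        qed
      qed
    qed
    also have "\<dots> = ennreal ((D1 + e) * (1 - x)^2 / 2)"
      by (rule integral_lin) (use D1nn e0 x01 in auto)
    finally have up: "F_norm M U x 1 - x \<le> (D1 + e) * (1 - x)^2 / 2"
      by (subst (asm) ennreal_le_iff) (use D1nn e0 in auto)
    have "ennreal (max 0 (D1 - e) * (1 - x)^2 / 2) = (\<integral>\<^sup>+ t. ennreal (indicator {x..1} t * (max 0 (D1 - e) * (1 - t))) \<partial>lborel)"
      by (rule integral_lin[symmetric]) (use x01 in auto)
    also have "\<dots> \<le> ennreal (F_norm M U x 1 - x)"
      unfolding tail[OF x01(1)]
    proof (rule nn_integral_mono, rule ennreal_leI)
      fix t :: real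
      show "indicator {x..1} t * (max 0 (D1 - e) * (1 - t)) \<le> indicator {x..} t * G t"
      proof (cases "t < x")
        case True then show ?thesis by simp
      next
        case False
        show ?thesis
        proof (cases "t < 1")
          case True
          have "(D1 - e) * (1 - t) \<le> G t" using Q[of t] False True by (simp add: algebra_simps abs_le_iff)
          moreover have "0 * (1 - t) \<le> G t" using G_nn[of t] by simp
          ultimately have "max 0 (D1 - e) * (1 - t) \<le> G t" by (simp add: max_def)
          then show ?thesis using False True by simp
        next
          case False2: False
          then show ?thesis using False G_nn[of t] by (auto simp: indicator_def)
        qed
      qed
    qed
    finally have "max 0 (D1 - e) * (1 - x)^2 / 2 \<le> F_norm M U x 1 - x"
      by (subst (asm) ennreal_le_iff) (use Fx[OF x01(1)] in auto)
    moreover have "(D1 - e) * (1 - x)^2 / 2 \<le> max 0 (D1 - e) * (1 - x)^2 / 2"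
      by (intro divide_right_mono mult_right_mono) auto
    ultimately have lo: "(D1 - e) * (1 - x)^2 / 2 \<le> F_norm M U x 1 - x" by linarith
    show ?thesis unfolding abs_le_iff using up lo by (simp add: algebra_simps diff_divide_distrib add_divide_distrib)
  qed
  have vlim: "filterlim (\<lambda>t. vec t :: real^'d) (at 1 within cbox 0 1) (at_left 1)"
    unfolding filterlim_at
  proof
    show "\<forall>\<^sub>F t in at_left 1. (vec t :: real^'d) \<in> cbox 0 1 \<and> vec t \<noteq> (1::real^'d)"
      using eventually_at_left_real[of 0 "1::real", simplified]
    proof (rule eventually_mono)
      fix t :: real assume "0 < t \<and> t < 1"
      then show "(vec t :: real^'d) \<in> cbox 0 1 \<and> vec t \<noteq> (1::real^'d)"
        by (auto simp: mem_box_cart vec_eq_iff)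
    qed
    show "((\<lambda>t. vec t :: real^'d) \<longlongrightarrow> 1) (at_left 1)"
      by (rule vec_tendstoI) (auto intro!: tendsto_eq_intros)
  qed
  show ?thesis
  proof (rule landau_o.smallI)
    fix c :: real assume c0: "0 < c"
    define c' where "c' = c / (D1 + 1)"
    have c'0: "0 < c'" unfolding c'_def using c0 D1nn by simp
    have c'D: "c' * D1 \<le> c"
    proof -
      have "c' * D1 \<le> c' * (D1 + 1)" using c'0 by simp
      also have "\<dots> = c" unfolding c'_def using D1nn by simp
      finally show ?thesis .
    qed
    have ev1: "\<forall>\<^sub>F u in at 1 within cbox 0 1. norm (copula_cdf M U u - (1 - D_norm N Z (1 - u))) \<le> c' * norm (D_norm N Z (1 - u))"
      by (rule landau_o.smallD[OF assms(3) c'0])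
    have ev2: "\<forall>\<^sub>F t in at_left 1. norm (copula_cdf M U (vec t) - (1 - D_norm N Z (1 - vec t))) \<le> c' * norm (D_norm N Z (1 - vec t))"
      using ev1 vlim unfolding filterlim_iff by blast
    have "\<forall>\<^sub>F t in at_left 1. \<bar>G t - D1 * (1 - t)\<bar> \<le> c * (1 - t)"
      using ev2 eventually_at_left_real[of 0 "1::real", simplified]
    proof eventually_elim
      case (elim t)
      have v: "(1::real^'d) - vec t = vec (1 - t)" by (simp add: vec_eq_iff)
      have Dn: "D_norm N Z (1 - vec t) = (1 - t) * D1"
        unfolding v D1_def by (rule D_norm_vec) (use elim in auto)
      have "\<bar>G t - D1 * (1 - t)\<bar> \<le> c' * ((1 - t) * D1)"
      proof -
        have n: "norm ((1 - t) * D1) = (1 - t) * D1" using elim(2) D1nn by simp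
        have eq: "\<bar>G t - D1 * (1 - t)\<bar> = norm (copula_cdf M U (vec t) - (1 - (1 - t) * D1))"
          unfolding G_eq by (simp add: algebra_simps abs_minus_commute)
        show ?thesis using elim(1) unfolding Dn eq n .
      qed
      also have "\<dots> = (1 - t) * (c' * D1)" by simp
      also have "\<dots> \<le> (1 - t) * c" using c'D elim(2) by (intro mult_left_mono) auto
      finally show ?case by (simp add: mult.commute)
    qed
    then obtain b where b1: "b < 1" and bQ: "\<And>t. b < t \<Longrightarrow> t < 1 \<Longrightarrow> \<bar>G t - D1 * (1 - t)\<bar> \<le> c * (1 - t)"
      unfolding eventually_at_left[of 0 "1::real", simplified] by blast
    show "\<forall>\<^sub>F x in at_left 1. norm ((1 - F_norm M U x 1) - ((1 - x) - (1 - x)^2 / 2 * D_norm N Z 1)) \<le> c * norm ((1 - x)^2)"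
      unfolding eventually_at_left[of 0 "1::real", simplified]
    proof (intro exI[of _ "max b 0"] conjI allI impI)
      show "max b 0 < 1" using b1 by simp
      fix x :: real assume x: "max b 0 < x" "x < 1"
      have "\<bar>F_norm M U x 1 - x - D1 * (1 - x)^2 / 2\<bar> \<le> c * (1 - x)^2 / 2"
        by (rule bounds) (use x c0 bQ in auto)
      also have "\<dots> \<le> c * (1 - x)^2" using c0 by simp
      finally show "norm ((1 - F_norm M U x 1) - ((1 - x) - (1 - x)^2 / 2 * D_norm N Z 1)) \<le> c * norm ((1 - x)^2)"
        unfolding D1_def[symmetric] by (simp add: abs_minus_commute algebra_simps)
    qed
  qed
qed

end
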